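(* Let $\Gamma$ be a symmetric multiset of even cardinality $N$, take $\tilde\Gamma=\Gamma$ (so $M=N$) and $p=0$, and let $k\ge 0$. Then the exponential pseudo-spline symbol $$a^{(k)}_{N,N,\Gamma}(z)=B^{(k)}_{N,\Gamma}(z)\,c^{(k)}_{N,\Gamma}(z)$$ is interpolatory, i.e. $$a^{(k)}_{N,N,\Gamma}(z)+a^{(k)}_{N,N,\Gamma}(-z)=2\quad\text{for all } z\neq0.$$
   Context: $\mathbb{R}^+$ denotes the positive reals, and $\lceil L\rceil:=\min\{m\in\mathbb{Z}:m\ge L\}$. Symmetric multiset: a multiset $\Gamma=\{\gamma_1,\dots,\gamma_N\}$ of complex numbers is symmetric if there exist distinct $\theta_1,\dots,\theta_q\in\mathbb{R}^+\cup\mathrm{i}[0,\pi)$ and positive integers $t_1,\dots,t_q$ such that: - $\Gamma$ consists of $\theta_j$ and $-\theta_j$, each with multiplicity $t_j$; - when $N$ is odd, $\Gamma$ contains one additional element $0$. Non-normalized symbol: $\tilde B^{(k)}_{L,\Lambda}(z):=z^{-\lceil L/2\rceil}\prod_{i=1}^L(e^{\lambda_i/2^{k+1}}z+1)$. Normalized symbol for $N$ even: fix one $\theta_j$ and set $B^{(k)}_{N,\Gamma}:=K^{(k)}\tilde B^{(k)}_{N,\Gamma}$ with $(K^{(k)})^{-1}=(e^{-\theta_j/2^{k+1}}+e^{\theta_j/2^{k+1}})\,\tilde B^{(k)}_{N-2,\Gamma'}(e^{\theta_j/2^{k+1}})$, where $\Gamma'$ is $\Gamma$ minus one copy each of $\pm\theta_j$.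 Let $\vartheta_1,\dots,\vartheta_n$ be the distinct values of $\Gamma$ with multiplicities $\tau_\ell$, and set $z_\ell=e^{-\vartheta_\ell/2^{k+1}}$. Then $c^{(k)}_{N,\Gamma}$ is the unique odd-symmetric Laurent polynomial ($c(z)=c(z^{-1})$) with coefficients supported in $[-N/2+1,N/2-1]$ satisfying $$c^{(s)}(z_\ell)=\sum_{i=0}^s\binom{s}{i}v_{\ell,i}\,G^{(s-i)}(z_\ell)\qquad(s=0,\dots,\tau_\ell-1),$$ where $G=1/B^{(k)}_{N,\Gamma}$ and $v_{\ell,i}=2\delta_{i,0}$ (the case $p=0$). *)

theory Defs
  imports "HOL-Analysis.Analysis" "HOL-Library.Multiset"
begin

definition theta_dom :: "complex set" where
  "theta_dom = complex_of_real ` {0<..} \<union> (\<lambda>y. \<i> * complex_of_real y) ` {0..<pi}"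

definition symmetric_mset :: "complex multiset \<Rightarrow> bool" where
  "symmetric_mset \<Gamma> \<longleftrightarrow>
     (\<exists>q::nat. \<exists>\<theta>::nat \<Rightarrow> complex. \<exists>t::nat \<Rightarrow> nat.
        inj_on \<theta> {..<q} \<and> (\<forall>j<q. \<theta> j \<in> theta_dom) \<and> (\<forall>j<q. 0 < t j) \<and>
        \<Gamma> = (\<Sum>j<q. replicate_mset (t j) (\<theta> j) + replicate_mset (t j) (- \<theta> j))
            + (if odd (size \<Gamma>) then {#0#} else {#}))"

definition Btilde :: "nat \<Rightarrow> complex multiset \<Rightarrow> complex \<Rightarrow> complex" where
  "Btilde k \<Lambda> z = z powi (- \<lceil>real (size \<Lambda>) / 2\<rceil>) *
     (\<Prod>l\<in>#\<Lambda>. exp (l / 2 ^ (k + 1)) * z + 1)"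

text \<open>Normalized symbol for N even, using the fixed theta_j = th.\<close>
definition Bnorm :: "nat \<Rightarrow> complex multiset \<Rightarrow> complex \<Rightarrow> complex \<Rightarrow> complex" where
  "Bnorm k \<Gamma> th z = Btilde k \<Gamma> z /
     ((exp (- th / 2 ^ (k + 1)) + exp (th / 2 ^ (k + 1))) *
      Btilde k (\<Gamma> - {#th, - th#}) (exp (th / 2 ^ (k + 1))))"

definition laurent_eval :: "nat \<Rightarrow> (int \<Rightarrow> complex) \<Rightarrow> complex \<Rightarrow> complex" where
  "laurent_eval N cf z = (\<Sum>j\<in>{- (int N div 2) + 1 .. int N div 2 - 1}. cf j * z powi j)"

text \<open>The defining conditions of c^(k)_{N,Gamma} (case p = 0, v_{l,i} = 2 delta_{i,0}).\<close>
definition c_conds :: "nat \<Rightarrow> complex multiset \<Rightarrow> complex \<Rightarrow> (int \<Rightarrow> complex) \<Rightarrow> bool" where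
  "c_conds k \<Gamma> th cf \<longleftrightarrow>
     (let N = size \<Gamma>; G = (\<lambda>z. 1 / Bnorm k \<Gamma> th z) in
       (\<forall>j. j \<notin> {- (int N div 2) + 1 .. int N div 2 - 1} \<longrightarrow> cf j = 0) \<and>
       (\<forall>z. z \<noteq> 0 \<longrightarrow> laurent_eval N cf z = laurent_eval N cf (inverse z)) \<and>
       (\<forall>v\<in>set_mset \<Gamma>. \<forall>s<count \<Gamma> v.
          let zl = exp (- v / 2 ^ (k + 1)) in
          (deriv ^^ s) (laurent_eval N cf) zl =
            (\<Sum>i=0..s. of_nat (s choose i) * (if i = 0 then 2 else 0) * (deriv ^^ (s - i)) G zl)))"

definition c_coeffs :: "nat \<Rightarrow> complex multiset \<Rightarrow> complex \<Rightarrow> int \<Rightarrow> complex" where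
  "c_coeffs k \<Gamma> th = (THE cf. c_conds k \<Gamma> th cf)"

definition c_sym :: "nat \<Rightarrow> complex multiset \<Rightarrow> complex \<Rightarrow> complex \<Rightarrow> complex" where
  "c_sym k \<Gamma> th z = laurent_eval (size \<Gamma>) (c_coeffs k \<Gamma> th) z"

definition a_sym :: "nat \<Rightarrow> complex multiset \<Rightarrow> complex \<Rightarrow> complex \<Rightarrow> complex" where
  "a_sym k \<Gamma> th z = Bnorm k \<Gamma> th z * c_sym k \<Gamma> th z"

end

theory Submission
  imports Defs "HOL-Complex_Analysis.Complex_Analysis" "HOL-Computational_Algebra.Computational_Algebra" "HOL-Computational_Algebra.Field_as_Ring"
begin

lemma in_sum_lessThan: "l \<in># (\<Sum>j<(q::nat). f j) \<Longrightarrow> \<exists>j<q. l \<in># f j"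
  by (induction q) (auto simp: less_Suc_eq)

lemma sym_facts:
  assumes "symmetric_mset \<Gamma>" "even (size \<Gamma>)"
  shows "image_mset uminus \<Gamma> = \<Gamma>" "\<forall>l\<in>#\<Gamma>. - pi < Im l \<and> Im l < pi"
proof -
  obtain q :: nat and \<theta> t where th: "\<forall>j<q. \<theta> j \<in> theta_dom"
    and G0: "\<Gamma> = (\<Sum>j<q. replicate_mset (t j) (\<theta> j) + replicate_mset (t j) (- \<theta> j))
            + (if odd (size \<Gamma>) then {#0#} else {#})"
    using assms(1) unfolding symmetric_mset_def by blast
  have G: "\<Gamma> = (\<Sum>j<q. replicate_mset (t j) (\<theta> j) + replicate_mset (t j) (- \<theta> j))"
    using G0 assms(2) by simp
  show "image_mset uminus \<Gamma> = \<Gamma>"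
    unfolding G by (induction q) (simp_all add: add_ac)
  have dom: "\<And>x. x \<in> theta_dom \<Longrightarrow> 0 \<le> Im x \<and> Im x < pi"
    unfolding theta_dom_def by auto
  show "\<forall>l\<in>#\<Gamma>. - pi < Im l \<and> Im l < pi"
  proof
    fix l assume "l \<in># \<Gamma>"
    then have "l \<in># (\<Sum>j<q. replicate_mset (t j) (\<theta> j) + replicate_mset (t j) (- \<theta> j))"
      using G by simp
    from in_sum_lessThan[OF this]
    have "\<exists>j<q. l \<in># replicate_mset (t j) (\<theta> j) + replicate_mset (t j) (- \<theta> j)" .
    then obtain j where j: "j < q" "l \<in># replicate_mset (t j) (\<theta> j) + replicate_mset (t j) (- \<theta> j)"
      by blast
    then have "l = \<theta> j \<or> l = - \<theta> j"
      by (metis in_replicate_mset union_iff)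

    have "\<theta> j \<in> theta_dom" using th j(1) by blast
    then have "0 \<le> Im (\<theta> j) \<and> Im (\<theta> j) < pi" by (rule dom)
    then show "- pi < Im l \<and> Im l < pi" using \<open>l = \<theta> j \<or> l = - \<theta> j\<close> pi_gt_zero by auto
  qed
qed


definition negp :: "complex poly \<Rightarrow> complex poly" where
  "negp p = pcompose p [:0, -1:]"

lemma coeff_negp: "coeff (negp p) i = (-1)^i * coeff p i"
  unfolding negp_def by (rule coeff_pcompose_linear)

lemma poly_negp [simp]: "poly (negp p) z = poly p (- z)"
  unfolding negp_def by (simp add: poly_pcompose)

lemma negp_negp [simp]: "negp (negp p) = p"
  by (rule poly_eqI) (simp add: coeff_negp power_mult_distrib[symmetric])

lemma negp_mult: "negp (p * q) = negp p * negp q"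
  unfolding negp_def by (rule pcompose_mult)

lemma negp_add: "negp (p + q) = negp p + negp q"
  unfolding negp_def by (rule pcompose_add)

lemma negp_diff: "negp (p - q) = negp p - negp q"
  unfolding negp_def by (rule pcompose_diff)

lemma negp_uminus: "negp (- p) = - negp p"
  unfolding negp_def by (rule pcompose_uminus)

lemma degree_negp [simp]: "degree (negp p) = degree p"
  unfolding negp_def by (simp add: degree_pcompose)

lemma negp_eq_0_iff [simp]: "negp p = 0 \<longleftrightarrow> p = 0"
  by (metis negp_negp negp_def pcompose_0)

lemma lead_negp: "lead_coeff (negp p) = (-1)^(degree p) * lead_coeff p"
  by (simp add: coeff_negp)

lemma poly_eq_nonzero:
  fixes p q :: "complex poly"
  assumes "\<And>z. z \<noteq> 0 \<Longrightarrow> poly p z = poly q z"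
  shows "p = q"
proof (rule ccontr)
  assume "p \<noteq> q"
  then have "p - q \<noteq> 0" by simp
  then have "finite {z. poly (p - q) z = 0}" by (rule poly_roots_finite)
  moreover have "UNIV - {0} \<subseteq> {z. poly (p - q) z = 0}" using assms by auto
  ultimately have "finite (UNIV - {0::complex})" by (rule finite_subset[rotated])
  then show False by (simp add: infinite_UNIV_char_0)
qed

lemma poly_sum_bound:
  fixes p :: "complex poly"
  assumes "degree p < n"
  shows "poly p z = (\<Sum>i<n. coeff p i * z ^ i)"
proof -
  have "poly p z = (\<Sum>i\<le>degree p. coeff p i * z ^ i)" by (rule poly_altdef)
  also have "\<dots> = (\<Sum>i<n. coeff p i * z ^ i)"
    by (rule sum.mono_neutral_left) (use assms in \<open>auto simp: coeff_eq_0\<close>)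
  finally show ?thesis .
qed

lemma coprime_lin:
  fixes a b :: complex
  assumes "a \<noteq> b"
  shows "coprime [:1, a:] [:1, b:]"
proof (rule coprimeI)
  fix c assume "c dvd [:1, a:]" "c dvd [:1, b:]"
  then have "c dvd smult b [:1, a:] - smult a [:1, b:]"
    by (intro dvd_diff dvd_smult)
  also have "smult b [:1, a:] - smult a [:1, b:] = [:b - a:]" by simp
  finally have "c dvd [:b - a:]" .
  moreover have "is_unit [:b - a:]"
  proof -
    have "1 = (b - a) * inverse (b - a)" using assms by simp
    then have "is_unit (b - a)" by (rule dvdI)
    then show ?thesis by (simp add: is_unit_poly_iff)
  qed
  ultimately show "is_unit c" by (rule dvd_unit_imp_unit)
qed

lemma coprime_prod_mset_right:
  fixes g :: "'a \<Rightarrow> complex poly"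
  assumes "\<And>y. y \<in># B \<Longrightarrow> coprime a (g y)"
  shows "coprime a (\<Prod>y\<in>#B. g y)"
  using assms by (induction B) auto

lemma coprime_prod_mset:
  fixes f g :: "'a \<Rightarrow> complex poly"
  assumes "\<And>x y. x \<in># A \<Longrightarrow> y \<in># B \<Longrightarrow> coprime (f x) (g y)"
  shows "coprime (\<Prod>x\<in>#A. f x) (\<Prod>y\<in>#B. g y)"
  using assms
proof (induction A)
  case empty then show ?case by simp
next
  case (add x A)
  have "coprime (f x) (\<Prod>y\<in>#B. g y)"
    using add.prems by (intro coprime_prod_mset_right) auto
  then show ?case using add by auto
qed

lemma prod_mset_exp: "(\<Prod>l\<in>#M. exp (f l :: complex)) = exp (\<Sum>l\<in>#M. f l)"
  by (induction M) (simp_all add: exp_add)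

lemma prod_mset_mult_distrib: "(\<Prod>l\<in>#M. (f l :: complex) * g l) = (\<Prod>l\<in>#M. f l) * (\<Prod>l\<in>#M. g l)"
  by (induction M) (simp_all add: algebra_simps)


lemma div_bound:
  fixes a :: complex
  assumes "\<bar>Im a\<bar> < 2*pi"
  shows "\<bar>Im (a / 2^(k+1))\<bar> < pi"
proof -
  have eq: "Im (a / 2^(k+1)) = Im a / 2^(k+1)"
    using Im_divide_of_real[of a "2^(k+1)"] by simp
  have "(2::real) ^ 1 \<le> 2^(k+1)"
    by (rule power_increasing) auto
  then have "(2::real) \<le> 2^(k+1)" by simp
  then have "\<bar>Im a\<bar> / 2^(k+1) \<le> \<bar>Im a\<bar> / 2"
    by (intro divide_left_mono) auto
  then show ?thesis using assms eq by (simp add: abs_divide)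
qed

lemma exp_ne_m1:
  fixes a :: complex
  assumes "\<bar>Im a\<bar> < 2*pi"
  shows "exp (a / 2^(k+1)) \<noteq> -1"
proof
  define w where "w = a / 2^(k+1)"
  have b: "\<bar>Im w\<bar> < pi" unfolding w_def by (rule div_bound[OF assms])
  assume "exp (a / 2^(k+1)) = -1"
  then have "exp w = -1" by (simp add: w_def)
  then have "exp (w + \<i> * of_real pi) = 1" by (simp add: exp_add)
  then obtain n :: int where n: "Im (w + \<i> * of_real pi) = of_int (2 * n) * pi"
    unfolding exp_eq_1 by blast
  then have "Im w + pi = of_int (2 * n) * pi" by simp
  moreover have "- pi < Im w" "Im w < pi" using b by auto
  ultimately have "0 < of_int (2 * n) * pi" "of_int (2 * n) * pi < 2 * pi" by linarith+
  then have "0 < (of_int (2 * n)::real)" "of_int (2 * n) < (2::real)"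
    using pi_gt_zero by (simp_all add: zero_less_mult_iff)
  then have "0 < n" "n < 1" by simp_all
  then show False by simp
qed

lemma exp_eq_1_zero:
  fixes a :: complex
  assumes "\<bar>Im a\<bar> < 2*pi" "exp (a / 2^(k+1)) = 1"
  shows "a = 0"
proof -
  define w where "w = a / 2^(k+1)"
  have b: "\<bar>Im w\<bar> < pi" unfolding w_def by (rule div_bound[OF assms(1)])
  from assms(2) obtain n :: int where n: "Re w = 0" "Im w = of_int (2 * n) * pi"
    unfolding exp_eq_1 w_def by blast
  with b have "\<bar>of_int (2 * n)\<bar> * pi < 1 * pi" by (simp add: abs_mult)
  then have "\<bar>of_int (2 * n)\<bar> < (1::real)" by (simp only: mult_less_cancel_right_pos[OF pi_gt_zero])
  then have "n = 0" by linarith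
  with n have "w = 0" by (simp add: complex_eq_iff)
  then show ?thesis by (simp add: w_def)
qed

lemma sum_mset_divide: "(\<Sum>l\<in>#M. f l / (c::complex)) = (\<Sum>l\<in>#M. f l) / c"
  by (induction M) (simp_all add: add_divide_distrib)

locale ES =
  fixes \<Gamma> :: "complex multiset" and k :: nat and th :: complex and m :: nat
  assumes symG: "image_mset uminus \<Gamma> = \<Gamma>"
    and stripG: "\<forall>l\<in>#\<Gamma>. - pi < Im l \<and> Im l < pi"
    and sizeG: "size \<Gamma> = 2*m+2"
    and thG: "th \<in># \<Gamma>"
begin

definition e :: "complex \<Rightarrow> complex" where "e l = exp (l / 2^(k+1))"

lemma e_ne0 [simp]: "e l \<noteq> 0" by (simp add: e_def)

lemma e_mult: "e a * e b = e (a + b)" by (simp add: e_def exp_add[symmetric] add_divide_distrib)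

lemma e_neg: "e (- a) * e a = 1" by (simp add: e_mult) (simp add: e_def)

lemma minus_in: "l \<in># \<Gamma> \<Longrightarrow> - l \<in># \<Gamma>"
  by (metis image_eqI set_image_mset symG)

lemma strip: "l \<in># \<Gamma> \<Longrightarrow> \<bar>Im l\<bar> < pi" using stripG by auto

lemma e_inj: "a \<in># \<Gamma> \<Longrightarrow> b \<in># \<Gamma> \<Longrightarrow> e a = e b \<Longrightarrow> a = b"
proof -
  assume a: "a \<in># \<Gamma>" and b: "b \<in># \<Gamma>" and eq: "e a = e b"
  have "e (a - b) = e a * e (- b)" by (simp add: e_mult)
  also have "\<dots> = 1" using eq e_neg[of b] by (simp add: mult.commute)
  finally have "exp ((a - b) / 2^(k+1)) = 1" by (simp add: e_def)
  moreover have "\<bar>Im (a - b)\<bar> < 2*pi" using strip[OF a] strip[OF b] by simp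
  ultimately have "a - b = 0" using exp_eq_1_zero by blast
  then show ?thesis by simp
qed

lemma e_prod_ne: "a \<in># \<Gamma> \<Longrightarrow> b \<in># \<Gamma> \<Longrightarrow> e a * e b \<noteq> -1"
proof -
  assume a: "a \<in># \<Gamma>" and b: "b \<in># \<Gamma>"
  have "\<bar>Im (a + b)\<bar> < 2*pi" using strip[OF a] strip[OF b] by simp
  then have "exp ((a + b) / 2^(k+1)) \<noteq> -1" by (rule exp_ne_m1)
  then show ?thesis unfolding e_mult by (simp add: e_def)
qed

lemma e_ne_neg: "a \<in># \<Gamma> \<Longrightarrow> b \<in># \<Gamma> \<Longrightarrow> e a \<noteq> - e b"
proof
  assume a: "a \<in># \<Gamma>" and b: "b \<in># \<Gamma>" and eq: "e a = - e b"
  have "e a * e (- b) = - (e (-b) * e b)" using eq by simp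
  also have "\<dots> = -1" using e_neg by simp
  finally show False using e_prod_ne[OF a minus_in[OF b]] by simp
qed

lemma sum_zero: "(\<Sum>l\<in>#\<Gamma>. l) = 0"
proof -
  have "(\<Sum>l\<in>#\<Gamma>. l) = (\<Sum>l\<in>#image_mset uminus \<Gamma>. l)" using symG by simp
  also have "\<dots> = - (\<Sum>l\<in>#\<Gamma>. l)" by (induction \<Gamma>) auto
  finally show ?thesis by simp
qed

lemma prod_e: "(\<Prod>l\<in>#\<Gamma>. e l) = 1"
proof -
  have "(\<Prod>l\<in>#\<Gamma>. e l) = exp (\<Sum>l\<in>#\<Gamma>. l / 2^(k+1))"
    unfolding e_def by (rule prod_mset_exp)
  also have "(\<Sum>l\<in>#\<Gamma>. l / 2^(k+1)) = (\<Sum>l\<in>#\<Gamma>. l) / 2^(k+1)"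
    by (rule sum_mset_divide)
  finally show ?thesis using sum_zero by simp
qed

end

lemma degree_prod_lin:
  fixes f :: "'a \<Rightarrow> complex"
  assumes "\<And>x. f x \<noteq> 0"
  shows "degree (\<Prod>x\<in>#M. [:1, f x:]) = size M \<and> (\<Prod>x\<in>#M. [:1, f x:]) \<noteq> 0"
proof (induction M)
  case empty then show ?case by simp
next
  case (add x M)
  have "[:1, f x:] \<noteq> 0" by simp
  moreover have "degree [:1, f x:] = 1" using assms by simp
  ultimately show ?case using add degree_mult_eq[of "[:1, f x:]" "\<Prod>x\<in>#M. [:1, f x:]"] by auto
qed

lemma negp_prod_mset: "negp (\<Prod>x\<in>#M. f x) = (\<Prod>x\<in>#M. negp (f x))"
proof (induction M)
  case empty
  have "negp 1 = 1" by (rule poly_eq_nonzero) simp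
  then show ?case by simp
next
  case (add x M) then show ?case by (simp add: negp_mult)
qed

lemma negp_lin: "negp [:1, c:] = [:1, - c:]"
  by (rule poly_eq_nonzero) simp

lemma negp_monom_odd: "odd n \<Longrightarrow> negp (monom c n) = - monom c n"
  by (rule poly_eqI) (auto simp: coeff_negp coeff_monom)

context ES
begin

definition P :: "complex poly" where "P = (\<Prod>l\<in>#\<Gamma>. [:1, e l:])"
definition Q :: "complex poly" where "Q = negp P"

definition Den :: complex where
  "Den = (exp (- th / 2 ^ (k + 1)) + exp (th / 2 ^ (k + 1))) *
      Btilde k (\<Gamma> - {#th, - th#}) (exp (th / 2 ^ (k + 1)))"

lemma P_facts: "degree P = 2*m+2" "P \<noteq> 0"
  using degree_prod_lin[of e \<Gamma>] sizeG by (auto simp: P_def)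

lemma Q_facts: "degree Q = 2*m+2" "Q \<noteq> 0" "negp Q = P"
  using P_facts by (auto simp: Q_def)

lemma poly_P: "poly P z = (\<Prod>l\<in>#\<Gamma>. exp (l / 2 ^ (k + 1)) * z + 1)"
  unfolding P_def poly_prod_mset by (simp add: e_def algebra_simps)

lemma coprime_PQ: "coprime P Q"
proof -
  have "Q = (\<Prod>l\<in>#\<Gamma>. [:1, - e l:])"
    unfolding Q_def P_def negp_prod_mset negp_lin ..
  moreover have "coprime P (\<Prod>l\<in>#\<Gamma>. [:1, - e l:])"
    unfolding P_def
    by (rule coprime_prod_mset, rule coprime_lin) (use e_ne_neg in blast)
  ultimately show ?thesis by simp
qed

lemma Den_ne0: "Den \<noteq> 0"
proof -
  have th': "- th \<in># \<Gamma>" by (rule minus_in[OF thG])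
  have 1: "exp (- th / 2 ^ (k + 1)) + exp (th / 2 ^ (k + 1)) \<noteq> 0"
  proof
    assume "exp (- th / 2 ^ (k + 1)) + exp (th / 2 ^ (k + 1)) = 0"
    then have "e (- th) + e th = 0" by (simp add: e_def)
    then have "e (- th) * e th + e th * e th = 0" by (metis distrib_right mult_zero_left)
    then have "e th * e th = - (e (- th) * e th)" by (simp only: eq_neg_iff_add_eq_0 add.commute)
    then have "e th * e th = -1" using e_neg by simp
    then show False using e_prod_ne[OF thG thG] by simp
  qed
  have 2: "Btilde k (\<Gamma> - {#th, - th#}) (exp (th / 2 ^ (k + 1))) \<noteq> 0"
  proof -
    have "\<forall>l\<in>#\<Gamma> - {#th, - th#}. exp (l / 2 ^ (k + 1)) * exp (th / 2 ^ (k + 1)) + 1 \<noteq> 0"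
    proof
      fix l assume "l \<in># \<Gamma> - {#th, - th#}"
      then have l: "l \<in># \<Gamma>" by (rule in_diffD)
      show "exp (l / 2 ^ (k + 1)) * exp (th / 2 ^ (k + 1)) + 1 \<noteq> 0"
        using e_prod_ne[OF l thG] unfolding e_def by (metis eq_neg_iff_add_eq_0)
    qed
    then show ?thesis unfolding Btilde_def by auto
  qed
  show ?thesis unfolding Den_def using 1 2 by simp
qed

lemma exists_r:
  fixes C :: complex
  shows "\<exists>r. degree r \<le> 2*m \<and> P * r - Q * negp r = monom C (2*m+1)"
proof -
  define X where "X = monom C (2*m+1)"
  have negX: "negp X = - X" unfolding X_def by (rule negp_monom_odd) simp
  have dX: "degree X \<le> 2*m+1" unfolding X_def by (simp add: degree_monom_le)
  have "gcd P Q = 1" using coprime_PQ by (simp add: coprime_iff_gcd_eq_1)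
  then obtain u v where uv: "u * P + v * Q = 1"
    using bezout_coefficients_fst_snd[of P Q] by metis
  define r0 where "r0 = (u * X) mod Q"
  define w where "w = v * X + (u * X div Q) * P"
  have r0eq: "r0 = u * X - (u * X div Q) * Q"
    using div_mult_mod_eq[of "u * X" Q] unfolding r0_def by (metis add_diff_cancel_left')
  have eq1: "r0 * P + w * Q = X"
  proof -
    have "r0 * P + w * Q = X * (u * P + v * Q)"
      unfolding r0eq w_def by (simp add: algebra_simps)
    then show ?thesis using uv by simp
  qed
  have dr0: "degree r0 \<le> 2*m+1"
    using degree_mod_less[OF Q_facts(2), of "u * X"] Q_facts(1) unfolding r0_def by auto
  have dw: "degree w \<le> 2*m+1"
  proof (cases "w = 0")
    case True then show ?thesis by simp
  next
    case False
    have "w * Q = X - r0 * P" using eq1 by (simp add: algebra_simps)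
    then have a: "degree (w * Q) \<le> max (degree X) (degree (r0 * P))"
      by (metis degree_diff_le_max)
    have b: "degree (r0 * P) \<le> degree r0 + degree P" by (rule degree_mult_le)
    have "max (degree X) (degree (r0 * P)) \<le> 4*m+3" using b dX dr0 P_facts(1) by simp
    then have "degree (w * Q) \<le> 4*m+3" using a by (rule le_trans[rotated])
    moreover have "degree (w * Q) = degree w + (2*m+2)"
      using degree_mult_eq[OF False Q_facts(2)] Q_facts(1) by simp
    ultimately show ?thesis by simp
  qed
  have eq1n: "negp r0 * Q + negp w * P = - X"
    using arg_cong[OF eq1, of negp] by (simp add: negp_add negp_mult Q_facts(3) negX Q_def[symmetric])
  have h0: "r0*P + w*Q + (negp r0*Q + negp w*P) = 0" using eq1 eq1n by simp
  have "(r0 + negp w) * P - (- negp r0 - w) * Q = r0*P + w*Q + (negp r0*Q + negp w*P)"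
    by (simp add: algebra_simps)
  then have "(r0 + negp w) * P = (- negp r0 - w) * Q" using h0 by simp
  then have "Q dvd (r0 + negp w) * P" by (metis dvd_triv_right)
  moreover have "coprime Q P" using coprime_PQ by (simp add: coprime_commute)
  ultimately have dv: "Q dvd r0 + negp w" by (simp add: coprime_dvd_mult_left_iff)
  have "r0 + negp w = 0"
  proof (rule ccontr)
    assume ne: "r0 + negp w \<noteq> 0"
    have "degree (r0 + negp w) \<le> 2*m+1"
      using dr0 dw by (metis degree_add_le degree_negp)
    moreover have "degree Q \<le> degree (r0 + negp w)" by (rule dvd_imp_degree_le[OF dv ne])
    ultimately show False using Q_facts(1) by simp
  qed
  then have "negp w = - r0" by (simp add: add_eq_0_iff)
  then have "w = - negp r0" by (metis negp_negp negp_uminus)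
  then have eq2: "P * r0 - Q * negp r0 = X" using eq1 by (simp add: algebra_simps)
  have "degree r0 \<le> 2*m"
  proof (rule ccontr)
    assume "\<not> degree r0 \<le> 2*m"
    then have d: "degree r0 = 2*m+1" using dr0 by simp
    then have "r0 \<noteq> 0" by auto
    have c1: "coeff (P * r0) (4*m+3) = lead_coeff P * lead_coeff r0"
    proof -
      have e1: "degree P + degree r0 = 4*m+3" using d P_facts(1) by simp
      show ?thesis using coeff_mult_degree_sum[of P r0] unfolding e1 .
    qed
    have c2: "coeff (Q * negp r0) (4*m+3) = lead_coeff Q * lead_coeff (negp r0)"
    proof -
      have e1: "degree Q + degree (negp r0) = 4*m+3" using d Q_facts(1) by simp
      show ?thesis using coeff_mult_degree_sum[of Q "negp r0"] unfolding e1 .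
    qed
    have lQ: "lead_coeff Q = lead_coeff P"
      unfolding Q_def lead_negp P_facts(1) by simp
    have lr: "lead_coeff (negp r0) = - lead_coeff r0"
      unfolding lead_negp d by simp
    have "coeff X (4*m+3) = 0" unfolding X_def by (simp add: coeff_monom)
    then have "coeff (P * r0 - Q * negp r0) (4*m+3) = 0" using eq2 by simp
    then have "2 * (lead_coeff P * lead_coeff r0) = 0"
      using c1 c2 lQ lr by (simp add: coeff_diff)
    moreover have "lead_coeff P \<noteq> 0" "lead_coeff r0 \<noteq> 0" using P_facts(2) \<open>r0 \<noteq> 0\<close> by auto
    ultimately show False by simp
  qed
  then show ?thesis using eq2 unfolding X_def by blast
qed

lemma uniq_r:
  assumes "degree r1 \<le> 2*m+1" "degree r2 \<le> 2*m+1"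
    and "P * r1 - Q * negp r1 = P * r2 - Q * negp r2"
  shows "r1 = r2"
proof (rule ccontr)
  define d where "d = r1 - r2"
  assume "r1 \<noteq> r2"
  then have ne: "d \<noteq> 0" by (simp add: d_def)
  have "d * P = Q * negp d" using assms(3) unfolding d_def negp_diff by (simp add: algebra_simps)
  then have "Q dvd d * P" by (metis dvd_triv_left)
  moreover have "coprime Q P" using coprime_PQ by (simp add: coprime_commute)
  ultimately have dv: "Q dvd d" by (simp add: coprime_dvd_mult_left_iff)
  have "degree d \<le> 2*m+1" unfolding d_def using assms(1,2) by (metis degree_diff_le le_trans max.bounded_iff)
  moreover have "degree Q \<le> degree d" by (rule dvd_imp_degree_le[OF dv ne])
  ultimately show False using Q_facts(1) by simp
qed

end

lemma vanish:
  fixes h g :: "complex \<Rightarrow> complex"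
  assumes "open U" "z0 \<in> U" "g holomorphic_on U" "\<forall>z\<in>U. h z = (z - z0)^n * g z" "s < n"
  shows "(deriv ^^ s) h z0 = 0"
  using assms(3-5)
proof (induction s arbitrary: n g h)
  case 0
  then show ?case using assms(2) by (simp add: zero_power)
next
  case (Suc s)
  then obtain n' where n: "n = Suc n'" by (cases n) auto
  define g1 where "g1 z = of_nat n * g z + (z - z0) * deriv g z" for z
  have g1h: "g1 holomorphic_on U"
    unfolding g1_def using Suc.prems(1) assms(1) by (intro holomorphic_intros) auto
  have dh: "\<forall>z\<in>U. deriv h z = (z - z0)^n' * g1 z"
  proof
    fix z assume z: "z \<in> U"
    have gd: "(g has_field_derivative deriv g z) (at z)"
      by (rule holomorphic_derivI[OF Suc.prems(1) assms(1) z])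
    have d1: "((\<lambda>z. z - z0) has_field_derivative 1) (at z)"
      using DERIV_diff[OF DERIV_ident DERIV_const[of z0]] by simp
    have d2: "((\<lambda>z. (z - z0)^n) has_field_derivative of_nat n * (1 * (z - z0)^(n - Suc 0))) (at z)"
      by (rule DERIV_power[OF d1])
    have "((\<lambda>z. (z - z0)^n * g z) has_field_derivative
           (of_nat n * (1 * (z - z0)^(n - Suc 0))) * g z + deriv g z * (z - z0)^n) (at z)"
      by (rule DERIV_mult[OF d2 gd])
    then have "(h has_field_derivative
           (of_nat n * (1 * (z - z0)^(n - Suc 0))) * g z + deriv g z * (z - z0)^n) (at z)"
      by (rule has_field_derivative_transform_within_open[OF _ assms(1) z]) (use Suc.prems(2) in auto)
    then have "deriv h z = (of_nat n * (1 * (z - z0)^(n - Suc 0))) * g z + deriv g z * (z - z0)^n"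
      by (rule DERIV_imp_deriv)
    also have "\<dots> = (z - z0)^n' * g1 z" unfolding g1_def n by (simp add: algebra_simps)
    finally show "deriv h z = (z - z0)^n' * g1 z" .
  qed
  have "(deriv ^^ s) (deriv h) z0 = 0"
    using Suc.IH[OF g1h dh] Suc.prems(3) n by simp
  then show ?case by (simp add: funpow_Suc_right del: funpow.simps)
qed

lemma higher_deriv_poly: "(deriv ^^ s) (poly p) = poly ((pderiv ^^ s) p)"
proof (induction s)
  case 0 then show ?case by simp
next
  case (Suc s)
  have "deriv (poly ((pderiv ^^ s) p)) = poly (pderiv ((pderiv ^^ s) p))"
    by (rule ext, rule DERIV_imp_deriv, rule poly_DERIV)
  then show ?case using Suc by simp
qed

lemma order_ge_derivs:
  fixes p :: "complex poly"
  assumes "p \<noteq> 0" "\<forall>s<n. poly ((pderiv ^^ s) p) a = 0"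
  shows "n \<le> order a p"
  using assms
proof (induction n arbitrary: p)
  case 0 then show ?case by simp
next
  case (Suc n)
  have root: "poly p a = 0" using Suc.prems(2) by (metis funpow_0 zero_less_Suc)
  have ord: "order a p = Suc (order a (pderiv p))" by (rule order_pderiv[OF Suc.prems(1) root])
  have "pderiv p \<noteq> 0"
  proof
    assume "pderiv p = 0"
    then obtain h where "p = [:h:]" using pderiv_iszero by blast
    then show False using root Suc.prems(1) by simp
  qed
  moreover have "\<forall>s<n. poly ((pderiv ^^ s) (pderiv p)) a = 0"
    using Suc.prems(2) by (auto simp: funpow_swap1[symmetric])
  ultimately have "n \<le> order a (pderiv p)" by (rule Suc.IH)
  then show ?case using ord by simp
qed


lemma powi_shift:
  fixes z :: complex
  assumes "z \<noteq> 0" "- int m \<le> j"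
  shows "z powi j = z ^ nat (j + int m) / z ^ m"
proof -
  have "j = int (nat (j + int m)) - int m" using assms(2) by simp
  then have "z powi j = z powi (int (nat (j + int m)) - int m)" by simp
  also have "\<dots> = z powi int (nat (j + int m)) / z powi int m"
    by (rule power_int_diff) (use assms(1) in simp)
  finally show ?thesis by (simp only: power_int_of_nat)
qed

lemma prod_mset_neg: "(\<Prod>l\<in>#M. f (- l)) = (\<Prod>l\<in>#image_mset uminus M. (f l :: complex))"
  by (induction M) auto

context ES
begin

lemma prod_neg: "(\<Prod>l\<in>#\<Gamma>. f (- l)) = (\<Prod>l\<in>#\<Gamma>. (f l :: complex))"
proof -
  have "(\<Prod>l\<in>#\<Gamma>. f (- l)) = (\<Prod>l\<in>#image_mset uminus \<Gamma>. f l)" by (rule prod_mset_neg)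
  then show ?thesis using symG by simp
qed

lemma pP: "poly P x = (\<Prod>l\<in>#\<Gamma>. 1 + x * e l)"
  unfolding P_def poly_prod_mset by simp

lemma P_palin:
  assumes z: "z \<noteq> 0"
  shows "poly P z = z^(2*m+2) * poly P (inverse z)"
proof -
  have "z^(2*m+2) * poly P (inverse z) = (\<Prod>l\<in>#\<Gamma>. z) * (\<Prod>l\<in>#\<Gamma>. 1 + inverse z * e l)"
    using sizeG by (simp add: pP)
  also have "\<dots> = (\<Prod>l\<in>#\<Gamma>. z * (1 + inverse z * e l))" by (rule prod_mset_mult_distrib[symmetric])
  also have "\<dots> = (\<Prod>l\<in>#\<Gamma>. z + e l)" using z by (simp add: distrib_left mult.assoc[symmetric])
  also have "\<dots> = (\<Prod>l\<in>#\<Gamma>. z + e (- l))" by (rule prod_neg[symmetric])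
  also have "\<dots> = (\<Prod>l\<in>#\<Gamma>. e (- l) * (1 + z * e l))"
  proof -
    have "\<And>l. e (- l) * (1 + z * e l) = e (- l) + z * (e (- l) * e l)" by (simp add: algebra_simps)
    then have "\<And>l. z + e (- l) = e (- l) * (1 + z * e l)" using e_neg by simp
    then show ?thesis by simp
  qed
  also have "\<dots> = (\<Prod>l\<in>#\<Gamma>. e (- l)) * poly P z" by (simp add: prod_mset_mult_distrib pP)
  also have "(\<Prod>l\<in>#\<Gamma>. e (- l)) = 1" using prod_neg[of e] prod_e by simp
  finally show ?thesis by simp
qed

definition rev_p :: "complex poly \<Rightarrow> complex poly" where
  "rev_p r = (\<Sum>i<2*m+1. monom (coeff r (2*m - i)) i)"

lemma coeff_rev_p: "coeff (rev_p r) j = (if j < 2*m+1 then coeff r (2*m - j) else 0)"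
  unfolding rev_p_def by (simp add: coeff_sum coeff_monom)

lemma degree_rev_p: "degree (rev_p r) \<le> 2*m"
  by (rule degree_le) (simp add: coeff_rev_p)

lemma poly_rev_p:
  assumes "degree r \<le> 2*m" "z \<noteq> 0"
  shows "poly (rev_p r) z = z^(2*m) * poly r (inverse z)"
proof -
  have "poly (rev_p r) z = (\<Sum>i<2*m+1. coeff (rev_p r) i * z^i)"
    by (rule poly_sum_bound) (use degree_rev_p[of r] in simp)
  also have "\<dots> = (\<Sum>i<2*m+1. coeff r (2*m - i) * z^i)"
    by (rule sum.cong) (simp_all add: coeff_rev_p)
  also have "\<dots> = (\<Sum>i<2*m+1. coeff r (2*m - i) * z^(2*m - (2*m - i)))"
    by (rule sum.cong) auto
  also have "\<dots> = (\<Sum>i<2*m+1. coeff r i * z^(2*m - i))"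
    using sum.nat_diff_reindex[of "\<lambda>j. coeff r j * z^(2*m - j)" "2*m+1"] by simp
  also have "\<dots> = (\<Sum>i<2*m+1. z^(2*m) * (coeff r i * inverse z ^ i))"
  proof (rule sum.cong)
    fix i assume "i \<in> {..<2*m+1}"
    then have "i \<le> 2*m" by simp
    then have "z^(2*m - i) = z^(2*m) * inverse z ^ i" using power_diff_conv_inverse[OF assms(2)] by blast
    then show "coeff r i * z^(2*m - i) = z^(2*m) * (coeff r i * inverse z ^ i)"
      by simp
  qed simp
  also have "\<dots> = z^(2*m) * (\<Sum>i<2*m+1. coeff r i * inverse z ^ i)"
    by (rule sum_distrib_left[symmetric])
  also have "(\<Sum>i<2*m+1. coeff r i * inverse z ^ i) = poly r (inverse z)"
    by (rule poly_sum_bound[symmetric]) (use assms(1) in simp)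
  finally show ?thesis .
qed

definition r_sol :: "complex poly" where
  "r_sol = (SOME r. degree r \<le> 2*m \<and> P * r - Q * negp r = monom (2 * Den) (2*m+1))"

lemma r_sol: "degree r_sol \<le> 2*m" "P * r_sol - Q * negp r_sol = monom (2 * Den) (2*m+1)"
  using someI_ex[OF exists_r[of "2 * Den"]] unfolding r_sol_def by blast+

lemma poly_r_eq: "poly P z * poly r_sol z - poly P (- z) * poly r_sol (- z) = 2 * Den * z^(2*m+1)"
  using arg_cong[OF r_sol(2), of "\<lambda>p. poly p z"] by (simp add: Q_def poly_monom)

lemma rev_sol: "rev_p r_sol = r_sol"
proof (rule uniq_r)
  show "degree (rev_p r_sol) \<le> 2*m+1" using degree_rev_p[of r_sol] by simp
  show "degree r_sol \<le> 2*m+1" using r_sol(1) by simp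
  show "P * rev_p r_sol - Q * negp (rev_p r_sol) = P * r_sol - Q * negp r_sol"
  proof (rule poly_eq_nonzero)
    fix z :: complex assume z: "z \<noteq> 0"
    define w where "w = inverse z"
    have w: "w \<noteq> 0" "z * w = 1" using z by (simp_all add: w_def)
    have a1: "poly P z = z^(2*m+2) * poly P w" using P_palin[OF z] by (simp add: w_def)
    have a2: "poly P (- z) = z^(2*m+2) * poly P (- w)"
      using P_palin[of "- z"] z by (simp add: w_def)
    have a3: "poly (rev_p r_sol) z = z^(2*m) * poly r_sol w"
      using poly_rev_p[OF r_sol(1) z] by (simp add: w_def)
    have a4: "poly (rev_p r_sol) (- z) = z^(2*m) * poly r_sol (- w)"
      using poly_rev_p[OF r_sol(1), of "- z"] z by (simp add: w_def)
    have "poly (P * rev_p r_sol - Q * negp (rev_p r_sol)) z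
        = poly P z * poly (rev_p r_sol) z - poly P (- z) * poly (rev_p r_sol) (- z)"
      by (simp add: Q_def)
    also have "\<dots> = z^(2*m+2) * z^(2*m) * (poly P w * poly r_sol w - poly P (- w) * poly r_sol (- w))"
      unfolding a1 a2 a3 a4 by (simp add: algebra_simps)
    also have "\<dots> = z^(2*m+2) * z^(2*m) * (2 * Den * w^(2*m+1))" unfolding poly_r_eq ..
    also have "\<dots> = 2 * Den * z^(2*m+1) * (z * w)^(2*m+1)"
    proof -
      have "z^(2*m+2) * z^(2*m) = z^(2*m+1) * z^(2*m+1)" by (simp add: power_add[symmetric])
      then show ?thesis by (simp add: power_mult_distrib algebra_simps)
    qed
    also have "\<dots> = 2 * Den * z^(2*m+1)" using w by simp
    also have "\<dots> = poly (P * r_sol - Q * negp r_sol) z" using poly_r_eq[of z] by (simp add: Q_def)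
    finally show "poly (P * rev_p r_sol - Q * negp (rev_p r_sol)) z = poly (P * r_sol - Q * negp r_sol) z" .
  qed
qed

end

context ES
begin

lemma half: "int (size \<Gamma>) div 2 = int m + 1"
proof -
  have "int (size \<Gamma>) = 2 * (int m + 1)" using sizeG by simp
  then show ?thesis by simp
qed

lemma rangeI: "{- (int (size \<Gamma>) div 2) + 1 .. int (size \<Gamma>) div 2 - 1} = {- int m .. int m}"
  by (simp add: half)

definition cf_of :: "complex poly \<Rightarrow> int \<Rightarrow> complex" where
  "cf_of r j = (if - int m \<le> j \<and> j \<le> int m then coeff r (nat (j + int m)) else 0)"

lemma laurent_cf_of:
  assumes "degree r \<le> 2*m" "z \<noteq> 0"
  shows "laurent_eval (size \<Gamma>) (cf_of r) z = poly r z / z^m"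
proof -
  have "laurent_eval (size \<Gamma>) (cf_of r) z = (\<Sum>j\<in>{- int m..int m}. cf_of r j * z powi j)"
    unfolding laurent_eval_def rangeI ..
  also have "\<dots> = (\<Sum>i<2*m+1. coeff r i * z^i / z^m)"
  proof (rule sum.reindex_bij_witness[where i="\<lambda>i. int i - int m" and j="\<lambda>j. nat (j + int m)"])
    fix a assume a: "a \<in> {- int m..int m}"
    then show "int (nat (a + int m)) - int m = a" by simp
    show "nat (a + int m) \<in> {..<2*m+1}" using a by auto
    show "coeff r (nat (a + int m)) * z ^ nat (a + int m) / z ^ m = cf_of r a * z powi a"
      using a powi_shift[OF assms(2), of m a] by (simp add: cf_of_def)
  next
    fix b assume b: "b \<in> {..<2*m+1}"
    then show "nat (int b - int m + int m) = b" by simp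
    show "int b - int m \<in> {- int m..int m}" using b by auto
  qed
  also have "\<dots> = (\<Sum>i<2*m+1. coeff r i * z^i) / z^m"
    by (rule sum_divide_distrib[symmetric])
  also have "(\<Sum>i<2*m+1. coeff r i * z^i) = poly r z"
    by (rule poly_sum_bound[symmetric]) (use assms(1) in simp)
  finally show ?thesis .
qed

definition p_of :: "(int \<Rightarrow> complex) \<Rightarrow> complex poly" where
  "p_of cf = (\<Sum>i<2*m+1. monom (cf (int i - int m)) i)"

lemma coeff_p_of: "coeff (p_of cf) i = (if i < 2*m+1 then cf (int i - int m) else 0)"
  unfolding p_of_def by (simp only: coeff_sum coeff_monom sum.delta) simp

lemma degree_p_of: "degree (p_of cf) \<le> 2*m"
  by (rule degree_le) (simp add: coeff_p_of)

lemma cf_of_p_of: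
  assumes "\<forall>j. j \<notin> {- int m .. int m} \<longrightarrow> cf j = 0"
  shows "cf_of (p_of cf) = cf"
proof
  fix j
  show "cf_of (p_of cf) j = cf j"
  proof (cases "- int m \<le> j \<and> j \<le> int m")
    case True
    then have "nat (j + int m) < 2*m+1" by auto
    then show ?thesis using True by (simp add: cf_of_def coeff_p_of)
  next
    case False
    then show ?thesis using assms by (auto simp: cf_of_def)
  qed
qed

lemma ceil_eq: "\<lceil>real (size \<Gamma>) / 2\<rceil> = int m + 1"
proof -
  have "real (size \<Gamma>) / 2 = of_int (int m + 1)" using sizeG by simp
  then show ?thesis by simp
qed

lemma Btilde_eq: "Btilde k \<Gamma> z = poly P z / z^(m+1)"
proof -
  have "z powi (- \<lceil>real (size \<Gamma>) / 2\<rceil>) = inverse (z^(m+1))"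
  proof -
    have "int m + 1 = int (m + 1)" by simp
    then show ?thesis unfolding ceil_eq power_int_minus by (simp only: power_int_of_nat)
  qed
  then show ?thesis unfolding Btilde_def poly_P[symmetric] by (simp only: divide_inverse mult.commute)
qed

lemma G_eq: "(\<lambda>z. 1 / Bnorm k \<Gamma> th z) = (\<lambda>z. z^(m+1) * Den / poly P z)"
proof
  fix z
  have "Bnorm k \<Gamma> th z = poly P z / z^(m+1) / Den" unfolding Bnorm_def Btilde_eq Den_def ..
  then show "1 / Bnorm k \<Gamma> th z = z^(m+1) * Den / poly P z"
    by (simp add: divide_inverse inverse_mult_distrib mult_ac)
qed

definition cf0 :: "int \<Rightarrow> complex" where "cf0 = cf_of r_sol"

lemma laurent_cf0: "z \<noteq> 0 \<Longrightarrow> laurent_eval (size \<Gamma>) cf0 z = poly r_sol z / z^m"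
  unfolding cf0_def by (rule laurent_cf_of[OF r_sol(1)])

lemma cf0_sym: "z \<noteq> 0 \<Longrightarrow> laurent_eval (size \<Gamma>) cf0 z = laurent_eval (size \<Gamma>) cf0 (inverse z)"
proof -
  assume z: "z \<noteq> 0"
  have "poly r_sol z = z^(2*m) * poly r_sol (inverse z)"
    using poly_rev_p[OF r_sol(1) z] rev_sol by simp
  moreover have "z^(2*m) = z^m * z^m" by (simp add: power_add[symmetric] mult_2)
  ultimately have "poly r_sol z = z^m * (z^m * poly r_sol (inverse z))" by simp
  then have a: "laurent_eval (size \<Gamma>) cf0 z = z^m * poly r_sol (inverse z)"
    using z by (simp add: laurent_cf0)
  have b: "laurent_eval (size \<Gamma>) cf0 (inverse z) = poly r_sol (inverse z) / (inverse z)^m"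
    using z by (simp add: laurent_cf0)
  also have "\<dots> = z^m * poly r_sol (inverse z)" by (simp add: power_inverse divide_inverse)
  finally show ?thesis using a by simp
qed

lemma Q_prod: "Q = (\<Prod>l\<in>#\<Gamma>. [:1, - e l:])"
  unfolding Q_def P_def negp_prod_mset negp_lin ..

lemma zl_facts:
  assumes v: "v \<in># \<Gamma>"
  shows "exp (- v / 2^(k+1)) \<noteq> 0" "poly P (exp (- v / 2^(k+1))) \<noteq> 0"
    "[:- exp (- v / 2^(k+1)), 1:] ^ count \<Gamma> v dvd Q"
proof -
  define zl where "zl = exp (- v / 2^(k+1))"
  have zle: "zl = e (- v)" by (simp add: zl_def e_def)
  show "exp (- v / 2^(k+1)) \<noteq> 0" by simp
  have "poly P zl = (\<Prod>l\<in>#\<Gamma>. 1 + zl * e l)" by (rule pP)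
  moreover have "\<forall>l\<in>#\<Gamma>. 1 + zl * e l \<noteq> 0"
  proof
    fix l assume l: "l \<in># \<Gamma>"
    have "e l * e (- v) \<noteq> -1" by (rule e_prod_ne[OF l minus_in[OF v]])
    then show "1 + zl * e l \<noteq> 0" unfolding zle by (metis add.commute eq_neg_iff_add_eq_0 mult.commute)
  qed
  ultimately show "poly P (exp (- v / 2^(k+1))) \<noteq> 0" unfolding zl_def by auto
  have "replicate_mset (count \<Gamma> v) v \<subseteq># \<Gamma>" by (simp add: count_le_replicate_mset_subset_eq[symmetric])
  then have "image_mset (\<lambda>l. [:1, - e l:]) (replicate_mset (count \<Gamma> v) v) \<subseteq># image_mset (\<lambda>l. [:1, - e l:]) \<Gamma>"
    by (rule image_mset_subseteq_mono)
  then have "prod_mset (image_mset (\<lambda>l. [:1, - e l:]) (replicate_mset (count \<Gamma> v) v)) dvd Q"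
    unfolding Q_prod by (rule prod_mset_subset_imp_dvd)
  then have d1: "[:1, - e v:] ^ count \<Gamma> v dvd Q" by simp
  have "[:1, - e v:] = [:- zl, 1:] * [:- e v:]"
    using e_neg[of v] unfolding zle by (simp add: mult.commute)
  then have "[:- zl, 1:] dvd [:1, - e v:]" by (metis dvd_triv_left)
  then have "[:- zl, 1:] ^ count \<Gamma> v dvd [:1, - e v:] ^ count \<Gamma> v" by (rule dvd_power_same)
  from dvd_trans[OF this d1] show "[:- exp (- v / 2^(k+1)), 1:] ^ count \<Gamma> v dvd Q" unfolding zl_def .
qed

end

context ES
begin

lemma open_U: "open (UNIV - insert 0 {z. poly P z = 0})"
  by (rule open_Diff[OF open_UNIV]) (simp add: finite_imp_closed poly_roots_finite P_facts(2))

lemma pow_split: "(z::complex)^(2*m+1) = z^(m+1) * z^m"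
  by (simp add: power_add[symmetric] mult_2)

lemma deriv_cond:
  assumes v: "v \<in># \<Gamma>" and s: "s < count \<Gamma> v"
  shows "(deriv ^^ s) (laurent_eval (size \<Gamma>) cf0) (exp (- v / 2 ^ (k + 1))) =
     (\<Sum>i=0..s. of_nat (s choose i) * (if i = 0 then 2 else 0) *
        (deriv ^^ (s - i)) (\<lambda>z. 1 / Bnorm k \<Gamma> th z) (exp (- v / 2 ^ (k + 1))))"
proof -
  define zl where "zl = exp (- v / 2 ^ (k + 1))"
  define U where "U = UNIV - insert 0 {z. poly P z = 0}"
  define cnt where "cnt = count \<Gamma> v"
  have oU: "open U" unfolding U_def by (rule open_U)
  have zlU: "zl \<in> U" using zl_facts(1,2)[OF v] unfolding U_def zl_def by auto
  obtain R where QR: "Q = [:- zl, 1:] ^ cnt * R"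
    using zl_facts(3)[OF v] unfolding zl_def cnt_def by (auto elim: dvdE)
  define f1 where "f1 z = poly r_sol z / z^m" for z
  define f2 where "f2 z = z^(m+1) * Den / poly P z" for z
  define g where "g z = poly R z * poly r_sol (- z) / (z^m * poly P z)" for z
  have f1h: "f1 holomorphic_on U" unfolding f1_def U_def by (intro holomorphic_intros) auto
  have f2h: "f2 holomorphic_on U" unfolding f2_def U_def by (intro holomorphic_intros) auto
  have f2h': "(\<lambda>z. 2 * f2 z) holomorphic_on U" using f2h by (intro holomorphic_intros)
  have gh: "g holomorphic_on U" unfolding g_def U_def by (intro holomorphic_intros) auto
  have heq: "\<forall>z\<in>U. f1 z - 2 * f2 z = (z - zl)^cnt * g z"
  proof
    fix z assume "z \<in> U"
    then have z: "z \<noteq> 0" and pz: "poly P z \<noteq> 0" unfolding U_def by auto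
    have lin: "poly [:- zl, 1:] z = z - zl" by simp
    have qz: "poly P (- z) = (z - zl)^cnt * poly R z"
      using arg_cong[OF QR, of "\<lambda>p. poly p z"] unfolding poly_mult poly_power lin by (simp add: Q_def)
    have key: "poly P z * poly r_sol z - 2 * Den * z^(2*m+1) = poly P (- z) * poly r_sol (- z)"
      using poly_r_eq[of z] by (simp add: algebra_simps)
    have e1: "f1 z * (z^m * poly P z) = poly P z * poly r_sol z" using z by (simp add: f1_def)
    have e2: "f2 z * (z^m * poly P z) = Den * z^(2*m+1)" using pz by (simp add: f2_def pow_split power_add[symmetric] mult_2)
    have "(f1 z - 2 * f2 z) * (z^m * poly P z) = f1 z * (z^m * poly P z) - 2 * (f2 z * (z^m * poly P z))"
      by (simp add: algebra_simps)
    also have "\<dots> = poly P (- z) * poly r_sol (- z)" unfolding e1 e2 key[symmetric] by simp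
    finally have "f1 z - 2 * f2 z = poly P (- z) * poly r_sol (- z) / (z^m * poly P z)"
      using z pz by (simp add: eq_divide_eq)
    also have "\<dots> = (z - zl)^cnt * g z" unfolding g_def qz by simp
    finally show "f1 z - 2 * f2 z = (z - zl)^cnt * g z" .
  qed
  have van: "(deriv ^^ s) (\<lambda>z. f1 z - 2 * f2 z) zl = 0"
    by (rule vanish[OF oU zlU gh heq]) (simp add: s cnt_def)
  have d1: "(deriv ^^ s) (\<lambda>z. f1 z - 2 * f2 z) zl = (deriv ^^ s) f1 zl - (deriv ^^ s) (\<lambda>z. 2 * f2 z) zl"
    by (rule higher_deriv_diff[OF f1h f2h' oU zlU])
  have d2: "(deriv ^^ s) (\<lambda>z. 2 * f2 z) zl = 2 * (deriv ^^ s) f2 zl"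
    by (rule higher_deriv_cmult[OF f2h zlU oU])
  have d3: "(deriv ^^ s) (laurent_eval (size \<Gamma>) cf0) zl = (deriv ^^ s) f1 zl"
  proof (rule higher_deriv_cong_ev)
    have "eventually (\<lambda>x. x \<in> U) (nhds zl)" by (rule eventually_nhds_in_open[OF oU zlU])
    then show "eventually (\<lambda>x. laurent_eval (size \<Gamma>) cf0 x = f1 x) (nhds zl)"
      by eventually_elim (auto simp: U_def f1_def laurent_cf0)
  qed simp
  have d4: "(\<lambda>z. 1 / Bnorm k \<Gamma> th z) = f2" unfolding G_eq f2_def ..
  have sumeq: "(\<Sum>i=0..s. of_nat (s choose i) * (if i = 0 then 2 else 0) * (deriv ^^ (s - i)) f2 zl)
      = 2 * (deriv ^^ s) f2 zl"
  proof -
    have "(\<Sum>i=0..s. of_nat (s choose i) * (if i = 0 then 2 else 0) * (deriv ^^ (s - i)) f2 zl)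
        = (\<Sum>i=0..s. if i = 0 then 2 * (deriv ^^ s) f2 zl else 0)"
      by (rule sum.cong) auto
    also have "\<dots> = 2 * (deriv ^^ s) f2 zl" by (simp add: sum.delta)
    finally show ?thesis .
  qed
  show ?thesis unfolding zl_def[symmetric] d4 sumeq d3 using van d1 d2 by simp
qed

lemma cf0_conds: "c_conds k \<Gamma> th cf0"
  unfolding c_conds_def Let_def
proof (intro conjI allI impI ballI)
  fix j assume "j \<notin> {- (int (size \<Gamma>) div 2) + 1..int (size \<Gamma>) div 2 - 1}"
  then show "cf0 j = 0" unfolding rangeI cf0_def cf_of_def by auto
next
  fix z :: complex assume "z \<noteq> 0"
  then show "laurent_eval (size \<Gamma>) cf0 z = laurent_eval (size \<Gamma>) cf0 (inverse z)" by (rule cf0_sym)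
next
  fix v s assume "v \<in># \<Gamma>" "s < count \<Gamma> v"
  then show "(deriv ^^ s) (laurent_eval (size \<Gamma>) cf0) (exp (- v / 2 ^ (k + 1))) =
     (\<Sum>i=0..s. of_nat (s choose i) * (if i = 0 then 2 else 0) *
        (deriv ^^ (s - i)) (\<lambda>z. 1 / Bnorm k \<Gamma> th z) (exp (- v / 2 ^ (k + 1))))"
    by (rule deriv_cond)
qed

lemma prod_dvd:
  fixes d :: "complex poly"
  assumes d: "d \<noteq> 0"
    and ord: "\<forall>v\<in>#\<Gamma>. count \<Gamma> v \<le> order (exp (- v / 2 ^ (k + 1))) d"
  shows "(\<Prod>v\<in>set_mset \<Gamma>. [:- exp (- v / 2 ^ (k + 1)), 1:] ^ count \<Gamma> v) dvd d"
proof -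
  define Z where "Z v = exp (- v / 2 ^ (k + 1))" for v :: complex
  have Zinj: "v = w" if "v \<in># \<Gamma>" "w \<in># \<Gamma>" "Z v = Z w" for v w
  proof -
    have "e (- v) = e (- w)" using that(3) by (simp add: Z_def e_def)
    then have "- v = - w" by (rule e_inj[OF minus_in[OF that(1)] minus_in[OF that(2)]])
    then show ?thesis by simp
  qed
  have "finite V \<Longrightarrow> V \<subseteq> set_mset \<Gamma> \<Longrightarrow> (\<Prod>v\<in>V. [:- Z v, 1:] ^ count \<Gamma> v) dvd d" for V
  proof (induction V rule: finite_induct)
    case empty then show ?case by simp
  next
    case (insert a V)
    define F where "F = (\<Prod>v\<in>V. [:- Z v, 1:] ^ count \<Gamma> v)"
    have a: "a \<in># \<Gamma>" using insert.prems by auto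
    have "F dvd d" using insert F_def by auto
    then obtain q where dq: "d = F * q" by (elim dvdE)
    have Fq: "F * q \<noteq> 0" using d dq by simp
    have "poly F (Z a) \<noteq> 0"
    proof -
      have "\<forall>v\<in>V. Z a - Z v \<noteq> 0"
      proof
        fix v assume "v \<in> V"
        then have "v \<in># \<Gamma>" "v \<noteq> a" using insert by auto
        then show "Z a - Z v \<noteq> 0" using Zinj[OF a] by auto
      qed
      then show ?thesis unfolding F_def poly_prod using insert(1) by (simp add: poly_power)
    qed
    then have o0: "order (Z a) F = 0" using order_root by blast
    have "order (Z a) d = order (Z a) F + order (Z a) q" unfolding dq by (rule order_mult[OF Fq])
    moreover have "count \<Gamma> a \<le> order (Z a) d" using ord a unfolding Z_def by blast
    ultimately have "count \<Gamma> a \<le> order (Z a) q" using o0 by simp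
    then have "[:- Z a, 1:] ^ count \<Gamma> a dvd q" by (simp add: order_divides)
    then have "F * [:- Z a, 1:] ^ count \<Gamma> a dvd F * q" by (rule mult_dvd_mono[OF dvd_refl])
    then show ?case unfolding dq F_def using insert(1,2) by (simp add: prod.insert mult.commute)
  qed
  then show ?thesis unfolding Z_def by simp
qed

lemma degree_prod_Z:
  "degree (\<Prod>v\<in>set_mset \<Gamma>. [:- exp (- v / 2 ^ (k + 1)), 1:] ^ count \<Gamma> v) = size \<Gamma>"
proof -
  have "degree (\<Prod>v\<in>set_mset \<Gamma>. [:- exp (- v / 2 ^ (k + 1)), 1:] ^ count \<Gamma> v)
      = (\<Sum>v\<in>set_mset \<Gamma>. degree ([:- exp (- v / 2 ^ (k + 1)), 1:] ^ count \<Gamma> v))"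
    by (rule degree_prod_eq_sum_degree) simp
  also have "\<dots> = (\<Sum>v\<in>set_mset \<Gamma>. count \<Gamma> v)" by (simp add: degree_linear_power)
  also have "\<dots> = size \<Gamma>" by (simp add: size_multiset_overloaded_eq)
  finally show ?thesis .
qed

lemma conds_unique:
  assumes cc: "c_conds k \<Gamma> th cf"
  shows "cf = cf0"
proof -
  have supp: "\<forall>j. j \<notin> {- int m..int m} \<longrightarrow> cf j = 0"
    using cc unfolding c_conds_def Let_def rangeI by blast
  have dc: "\<forall>v\<in>#\<Gamma>. \<forall>s<count \<Gamma> v. (deriv ^^ s) (laurent_eval (size \<Gamma>) cf) (exp (- v / 2 ^ (k + 1))) =
     (\<Sum>i=0..s. of_nat (s choose i) * (if i = 0 then 2 else 0) *
        (deriv ^^ (s - i)) (\<lambda>z. 1 / Bnorm k \<Gamma> th z) (exp (- v / 2 ^ (k + 1))))"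
    using cc unfolding c_conds_def Let_def by blast
  define p1 where "p1 = p_of cf"
  have cfp: "cf = cf_of p1" unfolding p1_def using cf_of_p_of[OF supp] by simp
  have lc: "laurent_eval (size \<Gamma>) cf z = poly p1 z / z^m" if "z \<noteq> 0" for z
    unfolding cfp by (rule laurent_cf_of[OF _ that]) (simp add: p1_def degree_p_of)
  define d where "d = p1 - r_sol"
  have dd: "degree d \<le> 2*m" unfolding d_def p1_def
    using degree_p_of[of cf] r_sol(1) by (metis degree_diff_le le_trans max.bounded_iff)
  have "d = 0"
  proof (rule ccontr)
    assume dne: "d \<noteq> 0"
    have "\<forall>v\<in>#\<Gamma>. count \<Gamma> v \<le> order (exp (- v / 2 ^ (k + 1))) d"
    proof
      fix v assume v: "v \<in># \<Gamma>"
      define zl where "zl = exp (- v / 2 ^ (k + 1))"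
      define S0 where "S0 = (UNIV - {0::complex})"
      have oS: "open S0" unfolding S0_def by auto
      have zS: "zl \<in> S0" unfolding S0_def zl_def by simp
      have evS: "eventually (\<lambda>x. x \<in> S0) (nhds zl)" by (rule eventually_nhds_in_open[OF oS zS])
      define q where "q z = poly d z / z^m" for z
      have h1: "(\<lambda>z. poly p1 z / z^m) holomorphic_on S0" unfolding S0_def by (intro holomorphic_intros) auto
      have h2: "(\<lambda>z. poly r_sol z / z^m) holomorphic_on S0" unfolding S0_def by (intro holomorphic_intros) auto
      have hq: "q holomorphic_on S0" unfolding q_def S0_def by (intro holomorphic_intros) auto
      have hm: "(\<lambda>z. z^m) holomorphic_on S0" by (intro holomorphic_intros)
      have qz: "\<forall>t<count \<Gamma> v. (deriv ^^ t) q zl = 0"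
      proof (intro allI impI)
        fix t assume t: "t < count \<Gamma> v"
        have a1: "(deriv ^^ t) (laurent_eval (size \<Gamma>) cf) zl = (deriv ^^ t) (laurent_eval (size \<Gamma>) cf0) zl"
          using dc cf0_conds v t unfolding c_conds_def Let_def zl_def by auto
        have a2: "(deriv ^^ t) (laurent_eval (size \<Gamma>) cf) zl = (deriv ^^ t) (\<lambda>z. poly p1 z / z^m) zl"
          by (rule higher_deriv_cong_ev[OF _ refl]) (use evS in \<open>eventually_elim, simp add: S0_def lc\<close>)
        have a3: "(deriv ^^ t) (laurent_eval (size \<Gamma>) cf0) zl = (deriv ^^ t) (\<lambda>z. poly r_sol z / z^m) zl"
          by (rule higher_deriv_cong_ev[OF _ refl]) (use evS in \<open>eventually_elim, simp add: S0_def laurent_cf0\<close>)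
        have "q = (\<lambda>z. poly p1 z / z^m - poly r_sol z / z^m)"
          unfolding q_def d_def by (simp add: diff_divide_distrib)
        then have "(deriv ^^ t) q zl = (deriv ^^ t) (\<lambda>z. poly p1 z / z^m) zl - (deriv ^^ t) (\<lambda>z. poly r_sol z / z^m) zl"
          using higher_deriv_diff[OF h1 h2 oS zS] by simp
        then show "(deriv ^^ t) q zl = 0" using a1 a2 a3 by simp
      qed
      have "\<forall>s<count \<Gamma> v. poly ((pderiv ^^ s) d) zl = 0"
      proof (intro allI impI)
        fix s assume s: "s < count \<Gamma> v"
        have "(deriv ^^ s) (poly d) zl = (deriv ^^ s) (\<lambda>z. z^m * q z) zl"
          by (rule higher_deriv_cong_ev[OF _ refl]) (use evS in \<open>eventually_elim, simp add: S0_def q_def\<close>)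
        also have "\<dots> = (\<Sum>i = 0..s. of_nat (s choose i) * (deriv ^^ i) (\<lambda>z. z^m) zl * (deriv ^^ (s - i)) q zl)"
          by (rule higher_deriv_mult[OF hm hq oS zS])
        also have "\<dots> = 0"
          by (rule sum.neutral) (use qz s in auto)
        finally show "poly ((pderiv ^^ s) d) zl = 0" by (simp add: higher_deriv_poly)
      qed
      then show "count \<Gamma> v \<le> order (exp (- v / 2 ^ (k + 1))) d"
        unfolding zl_def by (rule order_ge_derivs[OF dne])
    qed
    then have "(\<Prod>v\<in>set_mset \<Gamma>. [:- exp (- v / 2 ^ (k + 1)), 1:] ^ count \<Gamma> v) dvd d"
      by (rule prod_dvd[OF dne])
    then have "size \<Gamma> \<le> degree d" using dvd_imp_degree_le[OF _ dne] degree_prod_Z by metis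
    then show False using dd sizeG by simp
  qed
  then have "p1 = r_sol" unfolding d_def by simp
  then show ?thesis unfolding cfp cf0_def by simp
qed

lemma c_coeffs_eq: "c_coeffs k \<Gamma> th = cf0"
  unfolding c_coeffs_def
proof (rule the_equality)
  show "c_conds k \<Gamma> th cf0" by (rule cf0_conds)
next
  fix cf assume "c_conds k \<Gamma> th cf"
  then show "cf = cf0" by (rule conds_unique)
qed

lemma a_sym_eq: "z \<noteq> 0 \<Longrightarrow> a_sym k \<Gamma> th z = poly P z * poly r_sol z / (z^(2*m+1) * Den)"
proof -
  assume z: "z \<noteq> 0"
  have "a_sym k \<Gamma> th z = poly P z / z^(m+1) / Den * (poly r_sol z / z^m)"
    unfolding a_sym_def c_sym_def c_coeffs_eq laurent_cf0[OF z] Bnorm_def Btilde_eq Den_def ..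
  also have "\<dots> = poly P z * poly r_sol z / (z^(m+1) * z^m * Den)"
    by (simp add: field_simps)
  also have "z^(m+1) * z^m = z^(2*m+1)" by (rule pow_split[symmetric])
  finally show ?thesis .
qed

lemma interp: "z \<noteq> 0 \<Longrightarrow> a_sym k \<Gamma> th z + a_sym k \<Gamma> th (- z) = 2"
proof -
  assume z: "z \<noteq> 0"
  define W where "W = z^(2*m+1)"
  have W: "W \<noteq> 0" using z by (simp add: W_def)
  have mz: "(- z)^(2*m+1) = - W" by (simp add: W_def)
  have a1: "a_sym k \<Gamma> th z = poly P z * poly r_sol z / (W * Den)"
    unfolding W_def by (rule a_sym_eq[OF z])
  have a2: "a_sym k \<Gamma> th (- z) = poly P (- z) * poly r_sol (- z) / ((- W) * Den)"
    unfolding mz[symmetric] by (rule a_sym_eq) (simp add: z)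
  have r: "poly P z * poly r_sol z - poly P (- z) * poly r_sol (- z) = 2 * Den * W"
    unfolding W_def by (rule poly_r_eq)
  show ?thesis unfolding a1 a2 using W Den_ne0 r by (simp add: field_simps)
qed

end

theorem mainTheorem9:
  fixes \<Gamma> :: "complex multiset" and k :: nat and th :: complex
  assumes "symmetric_mset \<Gamma>"
    and "even (size \<Gamma>)"
    and "th \<in># \<Gamma>" and "th \<in> theta_dom"
  shows "\<forall>z::complex. z \<noteq> 0 \<longrightarrow> a_sym k \<Gamma> th z + a_sym k \<Gamma> th (- z) = 2"
proof -
  have sf: "image_mset uminus \<Gamma> = \<Gamma>" "\<forall>l\<in>#\<Gamma>. - pi < Im l \<and> Im l < pi"
    using sym_facts[OF assms(1,2)] by auto
  have "size \<Gamma> \<noteq> 0" using assms(3) by auto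
  moreover obtain j where j: "size \<Gamma> = 2*j" using assms(2) by (elim evenE)
  ultimately have m: "size \<Gamma> = 2*(j-1)+2" by (cases j) auto
  interpret ES \<Gamma> k th "j - 1" using sf m assms(3) by unfold_locales auto
  show ?thesis using interp by blast
qed


end
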